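(* Let $K$ be an infinite field with $\mathrm{char}(K)\neq 2$. Let $Q\in\mathcal{Q}(n,d,m)$ and let $h$ be a closed path in $Q$ with $h\not\equiv 0$. Then $\deg(h)\leq M(n,d,m)$, where $M(n,d,m)=2n$ if $n=m$ and $d\in\{n,n+1\}$, and $M(n,d,m)=3n$ otherwise.
   Context: A quiver $Q$ is a finite oriented graph; for an arrow $a$, $a''$ is its tail and $a'$ its head. A path $a=a_1\cdots a_s$ ($a_i$ arrows) satisfies $a_i'=a_{i+1}''$; it is closed (in the vertex $a_1''$) if $a_1''=a_s'$; $\deg(a)=s$, $a''=a_1''$, $a'=a_s'$, $V(a)=\{a_1'',a_1',\dots,a_s'\}$. A closed path $a$ is primitive if for every $w\in V(a)$ exactly one $i$ has $a_i'=w$. $m(Q)$ is the maximal degree of a primitive closed path in $Q$; $Q$ is strongly connected if some closed path contains all vertices; $\mathcal{Q}(n,d,m)$ is the set of strongly connected quivers with $n$ vertices, $d$ arrows and $m(Q)=m$. Closed paths are incident if they are closed paths in the same vertex. The equivalence $\equiv$ is the equivalence relation on the set of closed paths of $Q$ together with the symbol $0$ (elements taken up to sign, with $-0=0$) generated by: (1) $ab\equiv ba$ for paths $a,b$ such that $ab$ is a closed path; (2) $a_{\sigma(1)}\cdots a_{\sigma(t)}\equiv \mathrm{sign}(\sigma)\,a_1\cdots a_t$ for incident closed paths $a_1,\dots,a_t$, $t\geq2$, $\sigma\in S_t$; (3) $a_1^2a_2\equiv0$ for incident closed paths $a_1,a_2$; (4) if $\mathrm{char}(K)=2$ then $a_1^2\equiv0$,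 and if $\mathrm{char}(K)\neq2$ then $a_1a_2a_3a_4\equiv0$, for incident closed paths $a_1,\dots,a_4$. *)

theory Defs
  imports Main "HOL-Combinatorics.Permutations"
begin

text \<open>A quiver is given by a finite vertex set V, a finite arrow set E and
  maps tail (a'') and head (a') sending arrows to vertices.\<close>

definition quiver :: "'v set \<Rightarrow> 'e set \<Rightarrow> ('e \<Rightarrow> 'v) \<Rightarrow> ('e \<Rightarrow> 'v) \<Rightarrow> bool" where
  "quiver V E tail head \<longleftrightarrow> finite V \<and> finite E \<and> (\<forall>a\<in>E. tail a \<in> V \<and> head a \<in> V)"

definition is_path :: "'e set \<Rightarrow> ('e \<Rightarrow> 'v) \<Rightarrow> ('e \<Rightarrow> 'v) \<Rightarrow> 'e list \<Rightarrow> bool" where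
  "is_path E tail head p \<longleftrightarrow> p \<noteq> [] \<and> set p \<subseteq> E \<and>
     (\<forall>i. Suc i < length p \<longrightarrow> head (p ! i) = tail (p ! Suc i))"

definition closed_path :: "'e set \<Rightarrow> ('e \<Rightarrow> 'v) \<Rightarrow> ('e \<Rightarrow> 'v) \<Rightarrow> 'e list \<Rightarrow> bool" where
  "closed_path E tail head p \<longleftrightarrow> is_path E tail head p \<and> tail (hd p) = head (last p)"

definition closed_path_in :: "'e set \<Rightarrow> ('e \<Rightarrow> 'v) \<Rightarrow> ('e \<Rightarrow> 'v) \<Rightarrow> 'v \<Rightarrow> 'e list \<Rightarrow> bool" where
  "closed_path_in E tail head v p \<longleftrightarrow> closed_path E tail head p \<and> tail (hd p) = v"

definition path_vertices :: "('e \<Rightarrow> 'v) \<Rightarrow> ('e \<Rightarrow> 'v) \<Rightarrow> 'e list \<Rightarrow> 'v set" where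
  "path_vertices tail head p = insert (tail (hd p)) (head ` set p)"

definition primitive :: "'e set \<Rightarrow> ('e \<Rightarrow> 'v) \<Rightarrow> ('e \<Rightarrow> 'v) \<Rightarrow> 'e list \<Rightarrow> bool" where
  "primitive E tail head p \<longleftrightarrow> closed_path E tail head p \<and>
     (\<forall>w\<in>path_vertices tail head p. \<exists>!i. i < length p \<and> head (p ! i) = w)"

definition mQ :: "'e set \<Rightarrow> ('e \<Rightarrow> 'v) \<Rightarrow> ('e \<Rightarrow> 'v) \<Rightarrow> nat" where
  "mQ E tail head = Max {length p | p. primitive E tail head p}"

definition strongly_connected :: "'v set \<Rightarrow> 'e set \<Rightarrow> ('e \<Rightarrow> 'v) \<Rightarrow> ('e \<Rightarrow> 'v) \<Rightarrow> bool" where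
  "strongly_connected V E tail head \<longleftrightarrow>
     (\<exists>p. closed_path E tail head p \<and> V \<subseteq> path_vertices tail head p)"

definition in_Qndm :: "'v set \<Rightarrow> 'e set \<Rightarrow> ('e \<Rightarrow> 'v) \<Rightarrow> ('e \<Rightarrow> 'v) \<Rightarrow> nat \<Rightarrow> nat \<Rightarrow> nat \<Rightarrow> bool" where
  "in_Qndm V E tail head n d m \<longleftrightarrow> quiver V E tail head \<and> strongly_connected V E tail head \<and>
     card V = n \<and> card E = d \<and> mQ E tail head = m"

text \<open>Signed elements: None is the symbol 0 (with -0 = 0), Some (s, p) is +p if s, -p otherwise.
  The relation below is the equivalence generated by (1)-(4), each generating relation being
  imposed for both signs (x \<equiv> y gives -x \<equiv> -y).  The flag c2 says whether char K = 2.\<close>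

type_synonym 'e selt = "(bool \<times> 'e list) option"

inductive path_equiv :: "'e set \<Rightarrow> ('e \<Rightarrow> 'v) \<Rightarrow> ('e \<Rightarrow> 'v) \<Rightarrow> bool \<Rightarrow> 'e selt \<Rightarrow> 'e selt \<Rightarrow> bool"
  for E tail head c2 where
  refl: "path_equiv E tail head c2 x x"
| sym: "path_equiv E tail head c2 x y \<Longrightarrow> path_equiv E tail head c2 y x"
| trans: "path_equiv E tail head c2 x y \<Longrightarrow> path_equiv E tail head c2 y z \<Longrightarrow> path_equiv E tail head c2 x z"
| rot: "a \<noteq> [] \<Longrightarrow> b \<noteq> [] \<Longrightarrow> closed_path E tail head (a @ b) \<Longrightarrow>
        path_equiv E tail head c2 (Some (s, a @ b)) (Some (s, b @ a))"
| perm: "length xs \<ge> 2 \<Longrightarrow> (\<forall>x\<in>set xs. closed_path_in E tail head v x) \<Longrightarrow> \<sigma> permutes {..<length xs} \<Longrightarrow>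
        path_equiv E tail head c2
          (Some (s, concat (map (\<lambda>i. xs ! \<sigma> i) [0..<length xs])))
          (Some (s = (sign \<sigma> = 1), concat xs))"
| sq: "closed_path_in E tail head v a1 \<Longrightarrow> closed_path_in E tail head v a2 \<Longrightarrow>
        path_equiv E tail head c2 (Some (s, a1 @ a1 @ a2)) None"
| char2: "c2 \<Longrightarrow> closed_path_in E tail head v a1 \<Longrightarrow>
        path_equiv E tail head c2 (Some (s, a1 @ a1)) None"
| four: "\<not> c2 \<Longrightarrow> closed_path_in E tail head v a1 \<Longrightarrow> closed_path_in E tail head v a2 \<Longrightarrow>
        closed_path_in E tail head v a3 \<Longrightarrow> closed_path_in E tail head v a4 \<Longrightarrow>
        path_equiv E tail head c2 (Some (s, a1 @ a2 @ a3 @ a4)) None"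

definition bound_M :: "nat \<Rightarrow> nat \<Rightarrow> nat \<Rightarrow> nat" where
  "bound_M n d m = (if n = m \<and> (d = n \<or> d = n + 1) then 2 * n else 3 * n)"

end

theory Submission
  imports Defs "HOL-Library.Multiset"
begin

definition fr :: "'e set \<Rightarrow> ('e \<Rightarrow> 'v) \<Rightarrow> ('e \<Rightarrow> 'v) \<Rightarrow> 'v \<Rightarrow> 'e list \<Rightarrow> bool" where
  "fr E tail head v p \<longleftrightarrow> closed_path_in E tail head v p \<and> (\<forall>i. Suc i < length p \<longrightarrow> head (p!i) \<noteq> v)"

definition occ :: "('e \<Rightarrow> 'v) \<Rightarrow> 'v \<Rightarrow> 'e list \<Rightarrow> nat" where
  "occ head v xs = length (filter (\<lambda>a. head a = v) xs)"

definition det :: "'e set \<Rightarrow> ('e \<Rightarrow> 'v) \<Rightarrow> 'v \<Rightarrow> bool" where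
  "det E tail x \<longleftrightarrow> (\<forall>a\<in>E. \<forall>b\<in>E. tail a = x \<longrightarrow> tail b = x \<longrightarrow> a = b)"

lemma detD: "det E tail x \<Longrightarrow> a \<in> E \<Longrightarrow> b \<in> E \<Longrightarrow> tail a = x \<Longrightarrow> tail b = x \<Longrightarrow> a = b"
  unfolding det_def by blast

lemma inj_from_key:
  fixes L :: nat and f :: "nat \<Rightarrow> 'b"
  assumes "\<And>i j. i < j \<Longrightarrow> j < L \<Longrightarrow> f i \<noteq> f j"
  shows "inj_on f {..<L}"
proof (rule inj_onI)
  fix i j assume "i \<in> {..<L}" "j \<in> {..<L}" "f i = f j"
  then show "i = j" using assms[of i j] assms[of j i] by (cases i j rule: linorder_cases) auto
qed

lemma path_nth: "is_path E tail head p \<Longrightarrow> Suc i < length p \<Longrightarrow> head (p!i) = tail (p!Suc i)"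
  unfolding is_path_def by blast

lemma path_appendD1:
  assumes "is_path E tail head (a@b)" "a \<noteq> []"
  shows "is_path E tail head a"
  unfolding is_path_def
proof (intro conjI allI impI)
  show "a \<noteq> []" by fact
  show "set a \<subseteq> E" using assms(1) unfolding is_path_def by auto
  fix i assume i: "Suc i < length a"
  with assms(1) have "head ((a@b)!i) = tail ((a@b)! Suc i)" unfolding is_path_def by auto
  with i show "head (a!i) = tail (a! Suc i)" by (simp add: nth_append)
qed

lemma path_appendD2:
  assumes "is_path E tail head (a@b)" "b \<noteq> []"
  shows "is_path E tail head b"
  unfolding is_path_def
proof (intro conjI allI impI)
  show "b \<noteq> []" by fact
  show "set b \<subseteq> E" using assms(1) unfolding is_path_def by auto
  fix i assume i: "Suc i < length b"
  have all: "\<forall>i. Suc i < length (a@b) \<longrightarrow> head ((a@b)!i) = tail ((a@b)! Suc i)"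
    using assms(1) unfolding is_path_def by blast
  have "Suc (length a + i) < length (a@b)" using i by simp
  with all have "head ((a@b)!(length a + i)) = tail ((a@b)! Suc (length a + i))" by blast
  then show "head (b!i) = tail (b! Suc i)" by (metis add_Suc_right nth_append_length_plus)
qed

lemma path_append_link:
  assumes "is_path E tail head (a@b)" "a \<noteq> []" "b \<noteq> []"
  shows "head (last a) = tail (hd b)"
proof -
  have s: "Suc (length a - 1) = length a" using assms(2) by (cases a) auto
  have "Suc (length a - 1) < length (a@b)" using assms s by (cases b) auto
  with assms(1) have "head ((a@b)!(length a - 1)) = tail ((a@b)!Suc (length a - 1))"
    unfolding is_path_def by blast
  then show ?thesis using assms s by (simp add: nth_append last_conv_nth hd_conv_nth)
qed

lemma path_appendI:
  assumes "is_path E tail head a" "is_path E tail head b" "head (last a) = tail (hd b)"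
  shows "is_path E tail head (a@b)"
  unfolding is_path_def
proof (intro conjI allI impI)
  show "a@b \<noteq> []" using assms(1) unfolding is_path_def by auto
  show "set (a@b) \<subseteq> E" using assms(1,2) unfolding is_path_def by auto
  fix i assume i: "Suc i < length (a@b)"
  have an: "a \<noteq> []" "b \<noteq> []" using assms unfolding is_path_def by auto
  consider "Suc i < length a" | "Suc i = length a" | "Suc i > length a" by linarith
  then show "head ((a@b)!i) = tail ((a@b)!Suc i)"
  proof cases
    case 1 then show ?thesis using assms(1) unfolding is_path_def by (simp add: nth_append)
  next
    case 2
    then have "i = length a - 1" by simp
    then show ?thesis using assms(3) an 2 by (simp add: nth_append last_conv_nth hd_conv_nth)
  next
    case 3
    define j where "j = i - length a"
    have ij: "i = length a + j" using 3 j_def by simp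
    have j: "Suc j < length b" using i ij by simp
    have "head (b!j) = tail (b!Suc j)" using assms(2) j unfolding is_path_def by blast
    then show ?thesis unfolding ij by (simp add: nth_append)
  qed
qed

lemma closed_rotate:
  assumes "closed_path E tail head (a@b)" "a \<noteq> []" "b \<noteq> []"
  shows "closed_path E tail head (b@a)"
proof -
  have p: "is_path E tail head (a@b)" using assms(1) unfolding closed_path_def by auto
  have pa: "is_path E tail head a" using path_appendD1[OF p assms(2)] .
  have pb: "is_path E tail head b" using path_appendD2[OF p assms(3)] .
  have l: "head (last a) = tail (hd b)" using path_append_link[OF p assms(2,3)] .
  have l2: "head (last b) = tail (hd a)" using assms unfolding closed_path_def by simp
  have "is_path E tail head (b@a)" by (rule path_appendI[OF pb pa l2])
  then show ?thesis using l assms(2,3) unfolding closed_path_def by simp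
qed

lemma concat_closed_in:
  "ps \<noteq> [] \<Longrightarrow> \<forall>p\<in>set ps. closed_path_in E tail head v p \<Longrightarrow> closed_path_in E tail head v (concat ps)"
proof (induction ps)
  case Nil then show ?case by simp
next
  case (Cons p ps)
  show ?case
  proof (cases "ps = []")
    case True then show ?thesis using Cons by simp
  next
    case False
    have q: "closed_path_in E tail head v (concat ps)" using Cons False by simp
    have pc: "closed_path_in E tail head v p" using Cons by simp
    have qn: "concat ps \<noteq> []" using q unfolding closed_path_in_def closed_path_def is_path_def by auto
    have pn: "p \<noteq> []" using pc unfolding closed_path_in_def closed_path_def is_path_def by auto
    have "is_path E tail head (p @ concat ps)"
      apply (rule path_appendI)
      using q pc unfolding closed_path_in_def closed_path_def by auto
    then show ?thesis using q pc qn pn unfolding closed_path_in_def closed_path_def by auto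
  qed
qed

lemma fr_D:
  assumes "fr E tail head v p"
  shows "is_path E tail head p" "p \<noteq> []" "tail (hd p) = v" "head (last p) = v"
    "\<And>i. Suc i < length p \<Longrightarrow> head (p!i) \<noteq> v" "set p \<subseteq> E"
  using assms unfolding fr_def closed_path_in_def closed_path_def is_path_def by auto

lemma decomp:
  "is_path E tail head xs \<Longrightarrow> tail (hd xs) = v \<Longrightarrow> head (last xs) = v \<Longrightarrow>
   \<exists>ps. xs = concat ps \<and> ps \<noteq> [] \<and> (\<forall>p\<in>set ps. fr E tail head v p)"
proof (induction "length xs" arbitrary: xs rule: less_induct)
  case less
  have ne: "xs \<noteq> []" using less.prems unfolding is_path_def by auto
  have "\<exists>x\<in>set xs. head x = v" using ne less.prems(3) last_in_set[OF ne] by blast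
  then obtain ys x zs where xs: "xs = ys @ x # zs" and hx: "head x = v" and nys: "\<forall>y\<in>set ys. head y \<noteq> v"
    using split_list_first_prop[of xs "\<lambda>x. head x = v"] by blast
  define p where "p = ys @ [x]"
  have xs2: "xs = p @ zs" unfolding p_def xs by simp
  have pp: "is_path E tail head p" using path_appendD1[of E tail head p zs] less.prems(1) xs2 p_def by simp
  have frp: "fr E tail head v p"
    unfolding fr_def closed_path_in_def closed_path_def
  proof (intro conjI allI impI)
    show "is_path E tail head p" by fact
    show "tail (hd p) = v" using less.prems(2) xs p_def by (cases ys) auto
    then show "tail (hd p) = head (last p)" using hx p_def by simp
    fix i assume "Suc i < length p"
    then have "i < length ys" and "p!i = ys!i" unfolding p_def by (auto simp: nth_append)
    then have "p!i \<in> set ys" by simp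
    then show "head (p!i) \<noteq> v" using nys by blast
  qed
  show ?case
  proof (cases "zs = []")
    case True
    then show ?thesis using frp xs2 by (intro exI[of _ "[p]"]) auto
  next
    case False
    have pz: "is_path E tail head zs" using path_appendD2[of E tail head p zs] less.prems(1) xs2 False by simp
    have pn: "p \<noteq> []" unfolding p_def by simp
    have "head (last p) = tail (hd zs)" using path_append_link[of E tail head p zs] less.prems(1) xs2 False pn by simp
    then have t: "tail (hd zs) = v" using hx p_def by simp
    have h: "head (last zs) = v" using less.prems(3) xs2 False by simp
    have "length zs < length xs" using xs2 pn by simp
    then obtain ps where "zs = concat ps \<and> ps \<noteq> [] \<and> (\<forall>p\<in>set ps. fr E tail head v p)"
      using less.hyps pz t h by blast
    then show ?thesis using frp xs2 by (intro exI[of _ "p # ps"]) auto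
  qed
qed

lemma occ_fr: "fr E tail head v p \<Longrightarrow> occ head v p = 1"
proof -
  assume f: "fr E tail head v p"
  have pn: "p \<noteq> []" using fr_D[OF f] by simp
  have pe: "p = butlast p @ [last p]" using pn by simp
  have "filter (\<lambda>a. head a = v) (butlast p) = []"
  proof -
    have "\<forall>a\<in>set (butlast p). head a \<noteq> v"
    proof
      fix a assume "a \<in> set (butlast p)"
      then obtain i where i: "i < length (butlast p)" "a = butlast p ! i" by (auto simp: in_set_conv_nth)
      then have "a = p ! i" "Suc i < length p" by (auto simp: nth_butlast)
      then show "head a \<noteq> v" using fr_D(5)[OF f] by simp
    qed
    then show ?thesis by (simp add: filter_empty_conv)
  qed
  then have "occ head v p = length (filter (\<lambda>a. head a = v) (butlast p @ [last p]))"
    unfolding occ_def by (subst (1) pe) simp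
  also have "\<dots> = 1" using fr_D(4)[OF f] \<open>filter _ (butlast p) = []\<close> by simp
  finally show ?thesis .
qed

lemma occ_concat: "\<forall>p\<in>set ps. fr E tail head v p \<Longrightarrow> occ head v (concat ps) = length ps"
proof (induction ps)
  case Nil then show ?case by (simp add: occ_def)
next
  case (Cons p ps)
  then have "occ head v p = 1" using occ_fr by auto
  then show ?case using Cons by (simp add: occ_def)
qed

lemma occ_mset: "mset xs = mset ys \<Longrightarrow> occ head v xs = occ head v ys"
proof -
  assume e: "mset xs = mset ys"
  have "occ head v xs = size (filter_mset (\<lambda>a. head a = v) (mset xs))"
    unfolding occ_def by (simp only: size_mset[symmetric] mset_filter)
  also have "\<dots> = size (filter_mset (\<lambda>a. head a = v) (mset ys))" using e by simp
  also have "\<dots> = occ head v ys"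
    unfolding occ_def by (simp only: size_mset[symmetric] mset_filter)
  finally show ?thesis .
qed

lemma len_concat_le: "\<forall>p\<in>set ps. length p \<le> (n::nat) \<Longrightarrow> length (concat ps) \<le> length ps * n"
  by (induction ps) auto

lemma rotate_at:
  assumes "closed_path E tail head h" "i < length h"
  shows "\<exists>h'. path_equiv E tail head c2 (Some (s,h)) (Some (s,h')) \<and> closed_path E tail head h'
     \<and> tail (hd h') = head (h!i) \<and> mset h' = mset h"
proof (cases "Suc i = length h")
  case True
  have hn: "h \<noteq> []" using assms unfolding closed_path_def is_path_def by auto
  have ii: "i = length h - 1" using True by simp
  have "tail (hd h) = head (h!i)" using assms ii hn unfolding closed_path_def
    by (simp add: last_conv_nth)
  then show ?thesis using assms by (intro exI[of _ h]) (auto intro: path_equiv.refl)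
next
  case False
  let ?a = "take (Suc i) h" and ?b = "drop (Suc i) h"
  have ab: "h = ?a @ ?b" by simp
  have ne: "?a \<noteq> []" "?b \<noteq> []" using assms(2) False by auto
  have cl0: "closed_path E tail head (?a @ ?b)" using assms(1) by simp
  have eq: "path_equiv E tail head c2 (Some (s, ?a@?b)) (Some (s, ?b@?a))"
    by (rule path_equiv.rot[OF ne cl0])
  have cl: "closed_path E tail head (?b@?a)" using closed_rotate[OF cl0 ne] .
  have si: "Suc i < length h" using assms(2) False by simp
  have "tail (hd (?b@?a)) = tail (h ! Suc i)" using ne si by (simp add: hd_drop_conv_nth)
  also have "\<dots> = head (h!i)" using path_nth[of E tail head h i] assms(1) si unfolding closed_path_def by simp
  finally have t: "tail (hd (?b@?a)) = head (h!i)" .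
  have "mset (?b@?a) = mset ?a + mset ?b" by (simp add: union_commute)
  also have "\<dots> = mset (?a@?b)" by (simp only: mset_append)
  also have "\<dots> = mset h" by (simp only: append_take_drop_id)
  finally have m: "mset (?b@?a) = mset h" .
  show ?thesis using eq cl t m ab by (intro exI[of _ "?b@?a"]) simp
qed

lemma four_zero:
  assumes "closed_path E tail head h" "occ head v h \<ge> 4" "\<not> c2"
  shows "path_equiv E tail head c2 (Some (s,h)) None"
proof -
  have "filter (\<lambda>a. head a = v) h \<noteq> []" using assms(2) unfolding occ_def by auto
  then obtain a where "a \<in> set h" "head a = v" by (auto simp: filter_empty_conv)
  then obtain i where i: "i < length h" "head (h!i) = v" by (auto simp: in_set_conv_nth)
  obtain h' where h': "path_equiv E tail head c2 (Some (s,h)) (Some (s,h'))" "closed_path E tail head h'"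
     "tail (hd h') = v" "mset h' = mset h"
    using rotate_at[OF assms(1) i(1), of c2 s] i(2) by auto
  have o: "occ head v h' \<ge> 4" using occ_mset[OF h'(4), where head=head and v=v] assms(2) by simp
  have lv: "head (last h') = v" using h'(2,3) unfolding closed_path_def by simp
  obtain ps where ps: "h' = concat ps" "ps \<noteq> []" "\<forall>p\<in>set ps. fr E tail head v p"
    using decomp[of E tail head h' v] h'(2,3) lv unfolding closed_path_def by blast
  have "length ps \<ge> 4" using o occ_concat[OF ps(3)] ps(1) by simp
  then obtain p1 p2 p3 p4 r where pr: "ps = p1#p2#p3#p4#r"
    by (auto simp: Suc_le_length_iff numeral_eq_Suc)
  have cin: "\<forall>p\<in>set ps. closed_path_in E tail head v p" using ps(3) unfolding fr_def by auto
  have c4: "closed_path_in E tail head v (concat (p4#r))"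
    by (rule concat_closed_in) (use cin pr in auto)
  have "path_equiv E tail head c2 (Some (s, p1 @ p2 @ p3 @ concat (p4#r))) None"
    by (rule path_equiv.four[OF assms(3)]) (use cin pr c4 in auto)
  moreover have "h' = p1 @ p2 @ p3 @ concat (p4#r)" using ps(1) pr by simp
  ultimately show ?thesis using path_equiv.trans[OF h'(1)] by simp
qed

lemma three_zero:
  assumes "closed_path E tail head (p1@p2@p3)"
    and "closed_path_in E tail head v p1" "closed_path_in E tail head v p2" "closed_path_in E tail head v p3"
    and "p1 = p2 \<or> p2 = p3 \<or> p1 = p3"
  shows "path_equiv E tail head c2 (Some (s, p1@p2@p3)) None"
proof -
  have ne: "p1 \<noteq> []" "p2 \<noteq> []" "p3 \<noteq> []" using assms(2,3,4)
    unfolding closed_path_in_def closed_path_def is_path_def by auto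
  consider "p1 = p2" | "p2 = p3" | "p1 = p3" using assms(5) by blast
  then show ?thesis
  proof cases
    case 1 then show ?thesis using path_equiv.sq[OF assms(2) assms(4)] by simp
  next
    case 2
    have r: "path_equiv E tail head c2 (Some (s, p1@(p2@p3))) (Some (s, (p2@p3)@p1))"
      by (rule path_equiv.rot) (use ne assms(1) in auto)
    have "path_equiv E tail head c2 (Some (s, p2@p2@p1)) None" using path_equiv.sq[OF assms(3) assms(2)] .
    then show ?thesis using path_equiv.trans[OF r] 2 by simp
  next
    case 3
    have r: "path_equiv E tail head c2 (Some (s, (p1@p2)@p3)) (Some (s, p3@(p1@p2)))"
      by (rule path_equiv.rot) (use ne assms(1) in auto)
    have "path_equiv E tail head c2 (Some (s, p1@p1@p2)) None" using path_equiv.sq[OF assms(2) assms(3)] .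
    then show ?thesis using path_equiv.trans[OF r] 3 by simp
  qed
qed

lemma length_sum_occ:
  "finite V \<Longrightarrow> head ` set xs \<subseteq> V \<Longrightarrow> length xs = (\<Sum>v\<in>V. occ head v xs)"
proof (induction xs)
  case Nil then show ?case by (simp add: occ_def)
next
  case (Cons x xs)
  have IH: "length xs = (\<Sum>v\<in>V. occ head v xs)" using Cons by auto
  have hx: "head x \<in> V" using Cons.prems by auto
  have "(\<Sum>v\<in>V. occ head v (x#xs)) = (\<Sum>v\<in>V. (if head x = v then 1 else 0) + occ head v xs)"
    by (intro sum.cong refl) (auto simp: occ_def)
  also have "\<dots> = (\<Sum>v\<in>V. (if head x = v then 1 else 0)) + (\<Sum>v\<in>V. occ head v xs)"
    by (rule sum.distrib)
  also have "(\<Sum>v\<in>V. (if head x = v then 1 else 0)) = (1::nat)" using hx Cons.prems(1) by simp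
  finally show ?case using IH by simp
qed

lemma pigeon:
  assumes "finite V" "head ` set xs \<subseteq> V" "length xs > 3 * card V"
  shows "\<exists>v. occ head v xs \<ge> 4"
proof (rule ccontr)
  assume na: "\<not> ?thesis"
  have "\<forall>v\<in>V. occ head v xs \<le> 3"
  proof (intro ballI)
    fix v assume "v \<in> V"
    have "\<not> occ head v xs \<ge> 4" using na by blast
    then show "occ head v xs \<le> 3" by simp
  qed
  then have "(\<Sum>v\<in>V. occ head v xs) \<le> card V * 3" using sum_bounded_above[of V "\<lambda>v. occ head v xs" 3] by simp
  moreover have "length xs = (\<Sum>v\<in>V. occ head v xs)" using assms(1,2) by (rule length_sum_occ)
  ultimately show False using assms(3) by linarith
qed

lemma prim_inj:
  assumes "primitive E tail head c" "i < length c" "j < length c" "head (c!i) = head (c!j)"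
  shows "i = j"
proof -
  have w: "head (c!i) \<in> path_vertices tail head c" unfolding path_vertices_def using assms(2) by auto
  have all: "\<forall>w\<in>path_vertices tail head c. \<exists>!i. i < length c \<and> head (c!i) = w"
    using assms(1) unfolding primitive_def by (rule conjunct2)
  have u: "\<exists>!k. k < length c \<and> head (c!k) = head (c!i)" using bspec[OF all w] .
  then obtain k where uk: "\<forall>y. y < length c \<and> head (c!y) = head (c!i) \<longrightarrow> y = k"
    unfolding Ex1_def by blast
  have "i = k" using uk assms(2) by blast
  moreover have "j = k" using uk assms(3) assms(4)[symmetric] by blast
  ultimately show ?thesis by simp
qed

lemma prim_tail_inj:
  assumes "primitive E tail head c" "i < length c" "j < length c" "tail (c!i) = tail (c!j)"
  shows "i = j"
proof -
  have cl: "closed_path E tail head c" using assms(1) unfolding primitive_def by auto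
  have cn: "c \<noteq> []" using cl unfolding closed_path_def is_path_def by auto
  have tk: "tail (c!k) = head (c!(if k = 0 then length c - 1 else k - 1))" if "k < length c" for k
  proof (cases "k = 0")
    case True
    then show ?thesis using cl cn unfolding closed_path_def by (simp add: hd_conv_nth last_conv_nth)
  next
    case False
    then have "Suc (k - 1) < length c" "Suc (k-1) = k" using that by auto
    then show ?thesis using path_nth[of E tail head c "k - 1"] cl False unfolding closed_path_def by simp
  qed
  have "(if i = 0 then length c - 1 else i - 1) = (if j = 0 then length c - 1 else j - 1)"
    by (rule prim_inj[OF assms(1)]) (use assms tk in auto)
  then show ?thesis using assms(2,3) by (auto split: if_splits)
qed

lemma prim_len:
  assumes "quiver V E tail head" "primitive E tail head c"
  shows "length c \<le> card V"
proof -
  have cl: "set c \<subseteq> E" using assms(2) unfolding primitive_def closed_path_def is_path_def by auto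
  have "inj_on (\<lambda>i. head (c!i)) {..<length c}"
    by (rule inj_onI) (use prim_inj[OF assms(2)] in auto)
  moreover have "(\<lambda>i. head (c!i)) ` {..<length c} \<subseteq> V" using cl assms(1) unfolding quiver_def
    by (auto dest: nth_mem)
  moreover have "finite V" using assms(1) unfolding quiver_def by auto
  ultimately have "card {..<length c} \<le> card V" by (rule card_inj_on_le)
  then show ?thesis by simp
qed

lemma is_path_take: "is_path E tail head p \<Longrightarrow> 0 < k \<Longrightarrow> is_path E tail head (take k p)"
  using path_appendD1[of E tail head "take k p" "drop k p"]
  by (simp add: is_path_def)

lemma is_path_drop: "is_path E tail head p \<Longrightarrow> k < length p \<Longrightarrow> is_path E tail head (drop k p)"
  using path_appendD2[of E tail head "take k p" "drop k p"] by simp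

lemma exists_primitive:
  assumes "closed_path E tail head p"
  shows "\<exists>q. primitive E tail head q"
proof -
  obtain q where q: "closed_path E tail head q" and qmin: "\<forall>r. closed_path E tail head r \<longrightarrow> length q \<le> length r"
    using ex_has_least_nat[of "closed_path E tail head" p length] assms by blast
  have qp: "is_path E tail head q" using q unfolding closed_path_def by auto
  have key: "head (q!i) \<noteq> head (q!j)" if ij: "i < j" "j < length q" for i j
  proof
    assume eq: "head (q!i) = head (q!j)"
    define r where "r = take (j - i) (drop (Suc i) q)"
    have lr: "length r = j - i" unfolding r_def using ij by simp
    have rp: "is_path E tail head r" unfolding r_def
      by (rule is_path_take[OF is_path_drop[OF qp]]) (use ij in auto)
    have rn: "r \<noteq> []" using lr ij by auto
    have hr: "hd r = q ! Suc i" using rn ij unfolding r_def by (simp add: hd_conv_nth)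
    have la: "last r = q ! j" using rn ij lr unfolding r_def by (simp add: last_conv_nth)
    have "tail (q ! Suc i) = head (q!i)" using path_nth[OF qp, of i] ij by simp
    then have "closed_path E tail head r" unfolding closed_path_def using rp hr la eq by simp
    then have "length q \<le> length r" using qmin by blast
    then show False using lr ij by simp
  qed
  have inj: "i = j" if "i < length q" "j < length q" "head (q!i) = head (q!j)" for i j
    using key[of i j] key[of j i] that by (cases i j rule: linorder_cases) auto
  have "primitive E tail head q"
    unfolding primitive_def
  proof (intro conjI ballI)
    show "closed_path E tail head q" by fact
    fix w assume "w \<in> path_vertices tail head q"
    then have "w \<in> head ` set q" using q unfolding path_vertices_def closed_path_def is_path_def by auto
    then obtain i where i: "i < length q" "w = head (q!i)" by (auto simp: in_set_conv_nth)
    then show "\<exists>!i. i < length q \<and> head (q!i) = w" using inj by blast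
  qed
  then show ?thesis by blast
qed

lemma piece_len:
  assumes "quiver V E tail head" "fr E tail head v p"
    and dt: "\<forall>j. Suc j < length p \<longrightarrow> det E tail (head (p!j))"
  shows "length p \<le> card V"
proof -
  note f = fr_D[OF assms(2)]
  have key: "head (p!i) \<noteq> head (p!j)" if ij: "i < j" "j < length p" for i j
  proof
    assume eq: "head (p!i) = head (p!j)"
    have shift: "j + t < length p \<longrightarrow> head (p!(i+t)) = head (p!(j+t))" for t
    proof (induction t)
      case 0 then show ?case using eq by simp
    next
      case (Suc t)
      show ?case
      proof
        assume lt: "j + Suc t < length p"
        then have ih: "head (p!(i+t)) = head (p!(j+t))" using Suc by simp
        have s1: "Suc (i+t) < length p" "Suc (j+t) < length p" using lt ij by auto
        have d: "det E tail (head (p!(i+t)))" using dt s1 by blast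
        have t1: "tail (p!Suc(i+t)) = head (p!(i+t))" using path_nth[OF f(1) s1(1)] by simp
        have t2: "tail (p!Suc(j+t)) = head (p!(j+t))" using path_nth[OF f(1) s1(2)] by simp
        have m: "p!Suc(i+t) \<in> E" "p!Suc(j+t) \<in> E" using s1 f(6) by (auto dest: nth_mem)
        have "p!Suc(i+t) = p!Suc(j+t)" by (rule detD[OF d m(1) m(2)]) (use t1 t2 ih in simp_all)
        then show "head (p!(i + Suc t)) = head (p!(j + Suc t))" by simp
      qed
    qed
    define t where "t = length p - 1 - j"
    have jt: "j + t = length p - 1" "j + t < length p" using ij t_def by auto
    have "head (p!(j+t)) = v" using f(4) f(2) jt(1) by (simp add: last_conv_nth)
    moreover have "head (p!(i+t)) \<noteq> v" using f(5)[of "i+t"] jt ij by simp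
    ultimately show False using shift[of t] jt(2) by simp
  qed
  have inj: "inj_on (\<lambda>i. head (p!i)) {..<length p}"
    by (rule inj_from_key) (use key in blast)
  moreover have "(\<lambda>i. head (p!i)) ` {..<length p} \<subseteq> V" using f(6) assms(1) unfolding quiver_def
    by (auto dest: nth_mem)
  moreover have "finite V" using assms(1) unfolding quiver_def by auto
  ultimately have "card {..<length p} \<le> card V" by (rule card_inj_on_le)
  then show ?thesis by simp
qed

lemma piece_eq:
  assumes "fr E tail head v p" "fr E tail head v q" "hd p = hd q"
    and dt: "\<forall>j. Suc j < length p \<longrightarrow> det E tail (head (p!j))"
  shows "p = q"
proof -
  note f = fr_D[OF assms(1)] and g = fr_D[OF assms(2)]
  have eq: "t < length p \<longrightarrow> t < length q \<longrightarrow> p!t = q!t" for t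
  proof (induction t)
    case 0 then show ?case using assms(3) f(2) g(2) by (simp add: hd_conv_nth)
  next
    case (Suc t)
    show ?case
    proof (intro impI)
      assume a: "Suc t < length p" "Suc t < length q"
      then have ih: "p!t = q!t" using Suc by simp
      have d: "det E tail (head (p!t))" using dt a by blast
      have t1: "tail (p!Suc t) = head (p!t)" using path_nth[OF f(1) a(1)] by simp
      have t2: "tail (q!Suc t) = head (q!t)" using path_nth[OF g(1) a(2)] by simp
      have m: "p!Suc t \<in> E" "q!Suc t \<in> E" using a f(6) g(6) by (auto dest: nth_mem)
      show "p!Suc t = q!Suc t" by (rule detD[OF d m(1) m(2)]) (use t1 t2 ih in simp_all)
    qed
  qed
  have len: "length p = length q"
  proof (rule ccontr)
    assume "length p \<noteq> length q"
    then consider "length p < length q" | "length q < length p" by linarith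
    then show False
    proof cases
      case 1
      define k where "k = length p - 1"
      have k: "k < length p" "Suc k = length p" using f(2) k_def by auto
      have "p!k = q!k" using eq[of k] k 1 by simp
      moreover have "head (p!k) = v" using f(4) f(2) k_def by (simp add: last_conv_nth)
      moreover have "head (q!k) \<noteq> v" using g(5)[of k] k 1 by simp
      ultimately show False by simp
    next
      case 2
      define k where "k = length q - 1"
      have k: "k < length q" "Suc k = length q" using g(2) k_def by auto
      have "p!k = q!k" using eq[of k] k 2 by simp
      moreover have "head (q!k) = v" using g(4) g(2) k_def by (simp add: last_conv_nth)
      moreover have "head (p!k) \<noteq> v" using f(5)[of k] k 2 by simp
      ultimately show False by simp
    qed
  qed
  show ?thesis by (rule nth_equalityI) (use len eq in auto)
qed

theorem lemma2p4:
  fixes V :: "'v set" and E :: "'e set" and tail head :: "'e \<Rightarrow> 'v"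
    and n d m :: nat and h :: "'e list"
  assumes "infinite (UNIV :: 'k::field set)"
    and "CHAR('k) \<noteq> 2"
    and "in_Qndm V E tail head n d m"
    and "closed_path E tail head h"
    and "\<not> path_equiv E tail head (CHAR('k) = 2) (Some (True, h)) None"
  shows "length h \<le> bound_M n d m"
proof (rule ccontr)
  assume "\<not> length h \<le> bound_M n d m"
  then have long: "length h > bound_M n d m" by simp
  let ?c2 = "CHAR('k) = 2"
  have c2: "\<not> ?c2" using assms(2) by simp
  have q: "quiver V E tail head" "strongly_connected V E tail head" "card V = n" "card E = d"
    "mQ E tail head = m" using assms(3) unfolding in_Qndm_def by auto
  have fV: "finite V" and fE: "finite E" using q(1) unfolding quiver_def by auto
  have hp: "is_path E tail head h" using assms(4) unfolding closed_path_def by auto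
  have hE: "set h \<subseteq> E" and hn: "h \<noteq> []" using hp unfolding is_path_def by auto
  have hV: "head ` set h \<subseteq> V" using hE q(1) unfolding quiver_def by auto
  have zero: "path_equiv E tail head ?c2 (Some (True, h)) None"
  proof (cases "n = m \<and> (d = n \<or> d = n + 1)")
    case False
    then have "bound_M n d m = 3 * n" unfolding bound_M_def by auto
    then have "length h > 3 * card V" using long q(3) by simp
    then obtain v where "occ head v h \<ge> 4" using pigeon[OF fV hV] by blast
    then show ?thesis using four_zero[OF assms(4) _ c2] by blast
  next
    case True
    then have "bound_M n d m = 2 * n" unfolding bound_M_def by auto
    then have long2: "length h > 2 * n" using long by simp
    have dle: "d \<le> n + 1" using True by auto
    let ?S = "{length p |p. primitive E tail head p}"
    have finS: "finite ?S"
      by (rule finite_subset[of _ "{..card V}"]) (use prim_len[OF q(1)] in auto)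
    obtain p0 where "closed_path E tail head p0" using q(2) unfolding strongly_connected_def by blast
    then obtain p1 where "primitive E tail head p1" using exists_primitive by blast
    then have neS: "?S \<noteq> {}" by blast
    have "Max ?S \<in> ?S" using Max_in[OF finS neS] .
    moreover have "Max ?S = n" using q(5) True unfolding mQ_def by simp
    ultimately obtain c where cp: "primitive E tail head c" and lc: "length c = n" by auto
    have cE: "set c \<subseteq> E" using cp unfolding primitive_def closed_path_def is_path_def by auto
    have dc: "distinct c" unfolding distinct_conv_nth
    proof (intro allI impI)
      fix i j assume "i < length c" "j < length c" "i \<noteq> j"
      then show "c!i \<noteq> c!j" using prim_inj[OF cp, of i j] by auto
    qed
    have cc: "card (set c) = n" using distinct_card[OF dc] lc by simp
    define D where "D = E - set c"
    have cD: "card D \<le> 1" unfolding D_def using card_Diff_subset[OF finite_set cE] cc q(4) dle by simp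
    have fD: "finite D" unfolding D_def using fE by simp
    have Deq: "\<forall>a\<in>D. \<forall>b\<in>D. a = b" using cD fD card_le_Suc0_iff_eq[OF fD] by simp
    have ctail: "\<forall>a\<in>set c. \<forall>b\<in>set c. tail a = tail b \<longrightarrow> a = b"
      by (auto simp: in_set_conv_nth dest: prim_tail_inj[OF cp])
    define B where "B = tail ` D"
    have Beq: "\<forall>x\<in>B. \<forall>y\<in>B. x = y" unfolding B_def using Deq by auto
    have detB: "det E tail x" if "x \<notin> B" for x
      unfolding det_def
    proof (intro ballI impI)
      fix a b assume ab: "a \<in> E" "b \<in> E" "tail a = x" "tail b = x"
      then have "a \<notin> D" "b \<notin> D" using that unfolding B_def by (auto simp: image_iff)
      then have "a \<in> set c" "b \<in> set c" using ab unfolding D_def by auto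
      then show "a = b" using ctail ab by auto
    qed
    obtain v where vh: "v \<in> head ` set h" and vB: "\<forall>x\<in>head ` set h. x \<noteq> v \<longrightarrow> x \<notin> B"
    proof (cases "\<exists>x\<in>head ` set h. x \<in> B")
      case True
      then obtain v where v1: "v \<in> head ` set h" and v2: "v \<in> B" by blast
      show ?thesis
      proof (rule that[of v])
        show "v \<in> head ` set h" by (rule v1)
        show "\<forall>x\<in>head ` set h. x \<noteq> v \<longrightarrow> x \<notin> B" using Beq v2 by blast
      qed
    next
      case False
      show ?thesis
      proof (rule that[of "head (hd h)"])
        show "head (hd h) \<in> head ` set h" using hn by simp
        show "\<forall>x\<in>head ` set h. x \<noteq> head (hd h) \<longrightarrow> x \<notin> B" using False by blast
      qed
    qed
    obtain i where i: "i < length h" "head (h!i) = v" using vh by (auto simp: in_set_conv_nth)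
    obtain h' where h': "path_equiv E tail head ?c2 (Some (True,h)) (Some (True,h'))" "closed_path E tail head h'"
       "tail (hd h') = v" "mset h' = mset h"
      using rotate_at[OF assms(4) i(1), of ?c2 True] i(2) by auto
    have sh: "set h' = set h" using arg_cong[OF h'(4), of set_mset] by simp
    have lh: "length h' = length h" using arg_cong[OF h'(4), of size] by simp
    have lv: "head (last h') = v" using h'(2,3) unfolding closed_path_def by simp
    obtain ps where ps: "h' = concat ps" "ps \<noteq> []" "\<forall>p\<in>set ps. fr E tail head v p"
      using decomp[of E tail head h' v] h'(2,3) lv unfolding closed_path_def by blast
    have pdet: "\<forall>j. Suc j < length p \<longrightarrow> det E tail (head (p!j))" if pin: "p \<in> set ps" for p
    proof (intro allI impI)
      fix j assume j: "Suc j < length p"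
      have "head (p!j) \<noteq> v" using fr_D(5)[OF ps(3)[rule_format, OF pin] j] .
      moreover have "p!j \<in> set h"
      proof -
        have "p!j \<in> set p" using j by simp
        then have "p!j \<in> set h'" using pin ps(1) by auto
        then show ?thesis using sh by simp
      qed
      ultimately have "head (p!j) \<notin> B" using vB by blast
      then show "det E tail (head (p!j))" by (rule detB)
    qed
    have plen: "\<forall>p\<in>set ps. length p \<le> n"
      using piece_len[OF q(1)] ps(3) pdet q(3) by blast
    have "length h \<le> length ps * n" using len_concat_le[OF plen] ps(1) lh by simp
    then have k3: "length ps \<ge> 3"
    proof -
      assume hl: "length h \<le> length ps * n"
      show ?thesis
      proof (rule ccontr)
        assume "\<not> 3 \<le> length ps"
        then have "length ps \<le> 2" by simp
        then have "length ps * n \<le> 2 * n" by (rule mult_le_mono1)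
        then show False using hl long2 by linarith
      qed
    qed
    show ?thesis
    proof (cases "length ps \<ge> 4")
      case True
      have "occ head v h' \<ge> 4" using occ_concat[OF ps(3)] ps(1) True by simp
      then have "path_equiv E tail head ?c2 (Some (True,h')) None" by (rule four_zero[OF h'(2) _ c2])
      then show ?thesis by (rule path_equiv.trans[OF h'(1)])
    next
      case False
      then have "length ps = 3" using k3 by simp
      then obtain p1 p2 p3 where pr: "ps = [p1,p2,p3]"
        by (auto simp: numeral_eq_Suc length_Suc_conv)
      have f1: "fr E tail head v p1" and f2: "fr E tail head v p2" and f3: "fr E tail head v p3"
        using ps(3) pr by auto
      have a: "hd p1 \<in> E" "hd p2 \<in> E" "hd p3 \<in> E"
        using fr_D(2,6)[OF f1] fr_D(2,6)[OF f2] fr_D(2,6)[OF f3] by auto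
      have t: "tail (hd p1) = v" "tail (hd p2) = v" "tail (hd p3) = v"
        using fr_D(3)[OF f1] fr_D(3)[OF f2] fr_D(3)[OF f3] by auto
      have cls: "\<forall>x\<in>{hd p1, hd p2, hd p3}. x \<in> D \<or> x \<in> set c" using a unfolding D_def by auto
      have ex: "x \<in> D \<or> x \<in> set c" if "x \<in> E" for x using that unfolding D_def by auto
      have eqD: "x = y" if "x\<in>D" "y\<in>D" for x y using Deq that by blast
      have eqc: "x = y" if "x \<in> set c" "y \<in> set c" "tail x = v" "tail y = v" for x y
        using ctail that by auto
      have hh: "hd p1 = hd p2 \<or> hd p2 = hd p3 \<or> hd p1 = hd p3"
      proof (cases "hd p1 \<in> D")
        case True
        show ?thesis
        proof (cases "hd p2 \<in> D")
          case True then show ?thesis using \<open>hd p1 \<in> D\<close> eqD by blast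
        next
          case False
          then have c2': "hd p2 \<in> set c" using ex[OF a(2)] by blast
          show ?thesis
          proof (cases "hd p3 \<in> D")
            case True then show ?thesis using \<open>hd p1 \<in> D\<close> eqD by blast
          next
            case False
            then have "hd p3 \<in> set c" using ex[OF a(3)] by blast
            then show ?thesis using c2' eqc t by blast
          qed
        qed
      next
        case False
        then have c1: "hd p1 \<in> set c" using ex[OF a(1)] by blast
        show ?thesis
        proof (cases "hd p2 \<in> D")
          case True
          show ?thesis
          proof (cases "hd p3 \<in> D")
            case True then show ?thesis using \<open>hd p2 \<in> D\<close> eqD by blast
          next
            case False
            then have "hd p3 \<in> set c" using ex[OF a(3)] by blast
            then show ?thesis using c1 eqc t by blast
          qed
        next
          case False
          then have "hd p2 \<in> set c" using ex[OF a(2)] by blast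
          then show ?thesis using c1 eqc t by blast
        qed
      qed
      have d1: "\<forall>j. Suc j < length p1 \<longrightarrow> det E tail (head (p1!j))" using pdet pr by simp
      have d2: "\<forall>j. Suc j < length p2 \<longrightarrow> det E tail (head (p2!j))" using pdet pr by simp
      have "p1 = p2 \<or> p2 = p3 \<or> p1 = p3"
      proof -
        consider "hd p1 = hd p2" | "hd p2 = hd p3" | "hd p1 = hd p3" using hh by blast
        then show ?thesis
        proof cases
          case 1 then show ?thesis using piece_eq[OF f1 f2 _ d1] by blast
        next
          case 2 then show ?thesis using piece_eq[OF f2 f3 _ d2] by blast
        next
          case 3 then show ?thesis using piece_eq[OF f1 f3 _ d1] by blast
        qed
      qed
      moreover have "closed_path E tail head (p1@p2@p3)" using h'(2) ps(1) pr by simp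
      ultimately have "path_equiv E tail head ?c2 (Some (True,p1@p2@p3)) None"
        using three_zero[of E tail head p1 p2 p3 v] f1 f2 f3 unfolding fr_def by blast
      moreover have "h' = p1@p2@p3" using ps(1) pr by simp
      ultimately show ?thesis using path_equiv.trans[OF h'(1)] by simp
    qed
  qed
  with assms(5) show False by contradiction
qed

end
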